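(* Let $\Gamma=(G,\sigma)$, $G=(V,E)$, be a signed graph and $f:V\to\mathbb R$ a function not identically zero, with weak nodal domains $D_1,\dots,D_q$. Let $G_D$ be the graph with vertex set $\{D_1,\dots,D_q\}$ and edges $\{D_i,D_j\}$ whenever $D_i\sim D_j$, i.e. there exist $x\in D_i$ and $y\in D_j$ with $x\sim y$. If $G$ is connected, then $G_D$ is connected.
   Context: A signed graph is a finite simple undirected graph $G=(V,E)$ with $\sigma:E\to\{+1,-1\}$. A walk is $y_1,\dots,y_m$ ($m\ge2$) with consecutive vertices adjacent. For $f:V\to\mathbb R$, a W-walk of $f$ is a walk such that for any two consecutive nonzeros $y_i,y_j$ along it ($i<j$, $f(y_i)\ne0\ne f(y_j)$, $f(y_l)=0$ for $i<l<j$) one has $f(y_i)\sigma_{y_iy_{i+1}}\cdots\sigma_{y_{j-1}y_j}f(y_j)>0$. On $\Omega=\{x:f(x)\ne0\}$ the relation "$x=y$ or a W-walk connects $x$ and $y$" is an equivalence relation with classes $W_1,\dots,W_q$; the weak nodal domains of $f$ are the induced subgraphs on $W_i^0=W_i\cup\{x\in V:\text{there is a W-walk from } x \text{ to some vertex of } W_i\}$. *)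

theory Defs
  imports Complex_Main
begin

definition signed_graph :: "'a set \<Rightarrow> 'a set set \<Rightarrow> ('a set \<Rightarrow> real) \<Rightarrow> bool" where
  "signed_graph V E \<sigma> \<longleftrightarrow> finite V \<and>
     (\<forall>e\<in>E. \<exists>x y. x \<noteq> y \<and> x \<in> V \<and> y \<in> V \<and> e = {x, y}) \<and>
     (\<forall>e\<in>E. \<sigma> e = 1 \<or> \<sigma> e = -1)"

definition is_walk :: "'a set set \<Rightarrow> 'a list \<Rightarrow> bool" where
  "is_walk E ys \<longleftrightarrow> 2 \<le> length ys \<and>
     (\<forall>i. Suc i < length ys \<longrightarrow> {ys ! i, ys ! Suc i} \<in> E)"

definition walk_sign :: "('a set \<Rightarrow> real) \<Rightarrow> 'a list \<Rightarrow> nat \<Rightarrow> nat \<Rightarrow> real" where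
  "walk_sign \<sigma> ys i j = (\<Prod>l\<in>{i..<j}. \<sigma> {ys ! l, ys ! Suc l})"

definition is_W_walk :: "'a set set \<Rightarrow> ('a set \<Rightarrow> real) \<Rightarrow> ('a \<Rightarrow> real) \<Rightarrow> 'a list \<Rightarrow> bool" where
  "is_W_walk E \<sigma> f ys \<longleftrightarrow> is_walk E ys \<and>
     (\<forall>i j. i < j \<and> j < length ys \<and> f (ys ! i) \<noteq> 0 \<and> f (ys ! j) \<noteq> 0 \<and>
        (\<forall>l. i < l \<and> l < j \<longrightarrow> f (ys ! l) = 0) \<longrightarrow>
        f (ys ! i) * walk_sign \<sigma> ys i j * f (ys ! j) > 0)"

definition W_connects :: "'a set set \<Rightarrow> ('a set \<Rightarrow> real) \<Rightarrow> ('a \<Rightarrow> real) \<Rightarrow> 'a \<Rightarrow> 'a \<Rightarrow> bool" where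
  "W_connects E \<sigma> f x y \<longleftrightarrow> (\<exists>ys. is_W_walk E \<sigma> f ys \<and>
     ((hd ys = x \<and> last ys = y) \<or> (hd ys = y \<and> last ys = x)))"

definition nonzero_set :: "'a set \<Rightarrow> ('a \<Rightarrow> real) \<Rightarrow> 'a set" where
  "nonzero_set V f = {x\<in>V. f x \<noteq> 0}"

definition W_rel :: "'a set \<Rightarrow> 'a set set \<Rightarrow> ('a set \<Rightarrow> real) \<Rightarrow> ('a \<Rightarrow> real) \<Rightarrow> ('a \<times> 'a) set" where
  "W_rel V E \<sigma> f = {(x, y). x \<in> nonzero_set V f \<and> y \<in> nonzero_set V f \<and>
      (x = y \<or> W_connects E \<sigma> f x y)}"

definition W_classes :: "'a set \<Rightarrow> 'a set set \<Rightarrow> ('a set \<Rightarrow> real) \<Rightarrow> ('a \<Rightarrow> real) \<Rightarrow> 'a set set" where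
  "W_classes V E \<sigma> f = nonzero_set V f // W_rel V E \<sigma> f"

definition domain_of :: "'a set \<Rightarrow> 'a set set \<Rightarrow> ('a set \<Rightarrow> real) \<Rightarrow> ('a \<Rightarrow> real) \<Rightarrow> 'a set \<Rightarrow> 'a set" where
  "domain_of V E \<sigma> f W = W \<union> {x\<in>V. \<exists>ys. is_W_walk E \<sigma> f ys \<and> hd ys = x \<and> last ys \<in> W}"

text \<open>Adjacency of weak nodal domains D_i ~ D_j (indexed by the classes, i \<noteq> j).\<close>
definition domain_adj :: "'a set \<Rightarrow> 'a set set \<Rightarrow> ('a set \<Rightarrow> real) \<Rightarrow> ('a \<Rightarrow> real) \<Rightarrow> ('a set \<times> 'a set) set" where
  "domain_adj V E \<sigma> f = {(A, B). A \<in> W_classes V E \<sigma> f \<and> B \<in> W_classes V E \<sigma> f \<and> A \<noteq> B \<and>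
      (\<exists>x\<in>domain_of V E \<sigma> f A. \<exists>y\<in>domain_of V E \<sigma> f B. {x, y} \<in> E)}"

definition domain_graph_connected :: "'a set \<Rightarrow> 'a set set \<Rightarrow> ('a set \<Rightarrow> real) \<Rightarrow> ('a \<Rightarrow> real) \<Rightarrow> bool" where
  "domain_graph_connected V E \<sigma> f \<longleftrightarrow>
     (\<forall>A\<in>W_classes V E \<sigma> f. \<forall>B\<in>W_classes V E \<sigma> f. (A, B) \<in> (domain_adj V E \<sigma> f)\<^sup>*)"

definition graph_connected :: "'a set \<Rightarrow> 'a set set \<Rightarrow> bool" where
  "graph_connected V E \<longleftrightarrow>
     (\<forall>x\<in>V. \<forall>y\<in>V. x = y \<or> (\<exists>ys. is_walk E ys \<and> hd ys = x \<and> last ys = y))"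

end

theory Submission
  imports Defs
begin

lemma edge_in_V:
  assumes "signed_graph V E \<sigma>" "{a, b} \<in> E"
  shows "a \<in> V \<and> b \<in> V"
proof -
  obtain x y where "x \<in> V" "y \<in> V" "{a,b} = {x,y}"
    using assms unfolding signed_graph_def by blast
  then show ?thesis by (auto simp: doubleton_eq_iff)
qed

lemma walk_in_V:
  assumes "signed_graph V E \<sigma>" "is_walk E ys" "i < length ys"
  shows "ys ! i \<in> V"
proof (cases "Suc i < length ys")
  case True
  then have "{ys ! i, ys ! Suc i} \<in> E" using assms(2) unfolding is_walk_def by blast
  then show ?thesis using edge_in_V[OF assms(1)] by blast
next
  case False
  then have i: "i = Suc (i - 1)" using assms(2,3) unfolding is_walk_def by auto
  have "Suc (i - 1) < length ys" using i assms(3) by simp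
  then have "{ys ! (i - 1), ys ! Suc (i - 1)} \<in> E" using assms(2) unfolding is_walk_def by blast
  then show ?thesis using edge_in_V[OF assms(1)] i by metis
qed

lemma class_self:
  assumes "a \<in> nonzero_set V f"
  shows "W_rel V E \<sigma> f `` {a} \<in> W_classes V E \<sigma> f" "a \<in> W_rel V E \<sigma> f `` {a}"
proof -
  show "W_rel V E \<sigma> f `` {a} \<in> W_classes V E \<sigma> f"
    unfolding W_classes_def by (rule quotientI[OF assms])
  show "a \<in> W_rel V E \<sigma> f `` {a}" using assms by (simp add: W_rel_def)
qed

lemma class_nonempty:
  assumes "C \<in> W_classes V E \<sigma> f"
  shows "\<exists>a. a \<in> nonzero_set V f \<and> C = W_rel V E \<sigma> f `` {a} \<and> a \<in> C"
proof -
  obtain a where a: "a \<in> nonzero_set V f" "C = W_rel V E \<sigma> f `` {a}"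
    using assms unfolding W_classes_def by (rule quotientE)
  then have "a \<in> C" using class_self(2)[OF a(1)] by simp
  then show ?thesis using a by blast
qed

lemma cover:
  assumes sg: "signed_graph V E \<sigma>" and nz: "\<exists>x\<in>V. f x \<noteq> 0" and gc: "graph_connected V E"
    and v: "v \<in> V"
  shows "\<exists>C\<in>W_classes V E \<sigma> f. v \<in> domain_of V E \<sigma> f C"
proof (cases "f v = 0")
  case False
  then have "v \<in> nonzero_set V f" using v by (simp add: nonzero_set_def)
  note cs = class_self[OF this, of E \<sigma>]
  have "v \<in> domain_of V E \<sigma> f (W_rel V E \<sigma> f `` {v})"
    unfolding domain_of_def using cs(2) by blast
  then show ?thesis using cs(1) by blast
next
  case True
  obtain x0 where x0: "x0 \<in> V" "f x0 \<noteq> 0" using nz by blast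
  then have "v \<noteq> x0" using True by auto
  then obtain ys where w: "is_walk E ys" "hd ys = v" "last ys = x0"
    using gc v x0 unfolding graph_connected_def by blast
  have len: "2 \<le> length ys" using w unfolding is_walk_def by auto
  define P where "P = (\<lambda>k. k < length ys \<and> f (ys ! k) \<noteq> 0)"
  have ne: "ys \<noteq> []" using len by auto
  have "last ys = ys ! (length ys - 1)" using ne by (rule last_conv_nth)
  then have "P (length ys - 1)" using w x0 len unfolding P_def by simp
  then have Pk: "P (LEAST k. P k)" by (rule LeastI)
  define k where "k = (LEAST k. P k)"
  have Pk': "k < length ys" "f (ys ! k) \<noteq> 0" using Pk unfolding k_def P_def by auto
  have min: "\<And>i. i < length ys \<Longrightarrow> f (ys ! i) \<noteq> 0 \<Longrightarrow> k \<le> i"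
    unfolding k_def by (rule Least_le) (simp add: P_def)
  have h0: "ys ! 0 = v" using hd_conv_nth[OF ne] w(2) by simp
  have k0: "k \<noteq> 0"
  proof
    assume "k = 0" then show False using Pk'(2) h0 True by simp
  qed
  define zs where "zs = take (Suc k) ys"
  have lz: "length zs = Suc k" using Pk' by (simp add: zs_def)
  have wz: "is_walk E zs"
    unfolding is_walk_def
  proof (intro conjI allI impI)
    show "2 \<le> length zs" using lz k0 by simp
  next
    fix i assume "Suc i < length zs"
    then have si: "Suc i < length ys" "Suc i < Suc k" using lz Pk' by auto
    then have "{ys ! i, ys ! Suc i} \<in> E" using w(1) unfolding is_walk_def by blast
    then show "{zs ! i, zs ! Suc i} \<in> E" using si unfolding zs_def by simp
  qed
  have Wz: "is_W_walk E \<sigma> f zs"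
    unfolding is_W_walk_def
  proof (intro conjI allI impI wz)
    fix i j assume a: "i < j \<and> j < length zs \<and> f (zs ! i) \<noteq> 0 \<and> f (zs ! j) \<noteq> 0 \<and>
        (\<forall>l. i < l \<and> l < j \<longrightarrow> f (zs ! l) = 0)"
    from a have ij: "i < j" "j < length zs" "f (zs ! i) \<noteq> 0" by blast+
    then have "i < k" using lz by linarith
    moreover have "f (ys ! i) \<noteq> 0" using ij(3) \<open>i < k\<close> unfolding zs_def by simp
    moreover have "i < length ys" using \<open>i < k\<close> Pk'(1) by linarith
    ultimately have "k \<le> i" using min by blast
    then show "f (zs ! i) * walk_sign \<sigma> zs i j * f (zs ! j) > 0"
      using \<open>i < k\<close> by linarith
  qed
  have hz: "hd zs = v" using w(2) unfolding zs_def by (simp add: hd_take)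
  have "zs \<noteq> []" using lz by auto
  then have "last zs = zs ! k" using lz by (simp add: last_conv_nth)
  then have lzk: "last zs = ys ! k" unfolding zs_def by simp
  have "ys ! k \<in> nonzero_set V f" using walk_in_V[OF sg w(1) Pk'(1)] Pk'(2) by (simp add: nonzero_set_def)
  note cs = class_self[OF this, of E \<sigma>]
  have "v \<in> domain_of V E \<sigma> f (W_rel V E \<sigma> f `` {ys ! k})"
    unfolding domain_of_def
  proof (rule UnI2, rule CollectI, rule conjI[OF v], rule exI[of _ zs])
    show "is_W_walk E \<sigma> f zs \<and> hd zs = v \<and> last zs \<in> W_rel V E \<sigma> f `` {ys ! k}"
      using Wz hz lzk cs(2) by simp
  qed
  then show ?thesis using cs(1) by blast
qed

lemma adj_sym:
  "sym (domain_adj V E \<sigma> f)"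
proof (rule symI)
  fix A B assume "(A, B) \<in> domain_adj V E \<sigma> f"
  then obtain x y where h: "A \<in> W_classes V E \<sigma> f" "B \<in> W_classes V E \<sigma> f" "A \<noteq> B"
    "x \<in> domain_of V E \<sigma> f A" "y \<in> domain_of V E \<sigma> f B" "{x, y} \<in> E"
    unfolding domain_adj_def by blast
  have "{y, x} \<in> E" using h(6) by (simp add: insert_commute)
  then show "(B, A) \<in> domain_adj V E \<sigma> f" using h unfolding domain_adj_def by blast
qed

lemma step_adj:
  assumes "C \<in> W_classes V E \<sigma> f" "D \<in> W_classes V E \<sigma> f"
    "x \<in> domain_of V E \<sigma> f C" "y \<in> domain_of V E \<sigma> f D" "{x, y} \<in> E"
  shows "(C, D) \<in> (domain_adj V E \<sigma> f)\<^sup>*"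
proof (cases "C = D")
  case False
  then have "(C, D) \<in> domain_adj V E \<sigma> f" using assms unfolding domain_adj_def by blast
  then show ?thesis by blast
qed simp

lemma rt_sym:
  "(A, B) \<in> (domain_adj V E \<sigma> f)\<^sup>* \<Longrightarrow> (B, A) \<in> (domain_adj V E \<sigma> f)\<^sup>*"
proof -
  assume h: "(A, B) \<in> (domain_adj V E \<sigma> f)\<^sup>*"
  have "sym ((domain_adj V E \<sigma> f)\<^sup>*)" by (rule sym_rtrancl[OF adj_sym])
  then show ?thesis using h by (rule symD)
qed

lemma single_vertex:
  assumes sg: "signed_graph V E \<sigma>" and nz: "\<exists>x\<in>V. f x \<noteq> 0" and gc: "graph_connected V E"
    and x: "x \<in> V" and C: "C \<in> W_classes V E \<sigma> f" and C': "C' \<in> W_classes V E \<sigma> f"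
    and xC: "x \<in> domain_of V E \<sigma> f C" and xC': "x \<in> domain_of V E \<sigma> f C'"
  shows "(C, C') \<in> (domain_adj V E \<sigma> f)\<^sup>*"
proof (cases "\<exists>y\<in>V. y \<noteq> x")
  case True
  then obtain y where "y \<in> V" "y \<noteq> x" by blast
  then have "x = y \<or> (\<exists>ys. is_walk E ys \<and> hd ys = x \<and> last ys = y)"
    using gc x unfolding graph_connected_def by blast
  then obtain ys where w: "is_walk E ys" "hd ys = x" "last ys = y"
    using \<open>y \<noteq> x\<close> by blast
  have len: "2 \<le> length ys" using w unfolding is_walk_def by auto
  have ne: "ys \<noteq> []" using len by auto
  have h0: "ys ! 0 = x" using hd_conv_nth[OF ne] w(2) by simp
  have "{ys ! 0, ys ! Suc 0} \<in> E" using w(1) len unfolding is_walk_def by simp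
  then have e: "{x, ys ! 1} \<in> E" using h0 by simp
  have "ys ! 1 \<in> V" using walk_in_V[OF sg w(1)] len by simp
  then obtain D where D: "D \<in> W_classes V E \<sigma> f" "ys ! 1 \<in> domain_of V E \<sigma> f D"
    using cover[OF sg nz gc] by blast
  have CD: "(C, D) \<in> (domain_adj V E \<sigma> f)\<^sup>*" by (rule step_adj[OF C D(1) xC D(2) e])
  have C'D: "(C', D) \<in> (domain_adj V E \<sigma> f)\<^sup>*" by (rule step_adj[OF C' D(1) xC' D(2) e])
  show ?thesis by (rule rtrancl_trans[OF CD rt_sym[OF C'D]])
next
  case False
  then have V: "\<forall>y\<in>V. y = x" by blast
  obtain a where a: "a \<in> nonzero_set V f" "C = W_rel V E \<sigma> f `` {a}"
    using class_nonempty[OF C] by blast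
  obtain b where b: "b \<in> nonzero_set V f" "C' = W_rel V E \<sigma> f `` {b}"
    using class_nonempty[OF C'] by blast
  have aV: "a \<in> V" and bV: "b \<in> V" using a(1) b(1) unfolding nonzero_set_def by blast+
  have "a = x" using bspec[OF V aV] .
  moreover have "b = x" using bspec[OF V bV] .
  ultimately have "a = b" by simp
  then have "C = C'" using a(2) b(2) by simp
  then show ?thesis by simp
qed

lemma walk_chain:
  assumes sg: "signed_graph V E \<sigma>" and nz: "\<exists>x\<in>V. f x \<noteq> 0" and gc: "graph_connected V E"
  shows "ys \<noteq> [] \<Longrightarrow> (\<forall>i. Suc i < length ys \<longrightarrow> {ys ! i, ys ! Suc i} \<in> E) \<Longrightarrow> set ys \<subseteq> V \<Longrightarrow>
    C \<in> W_classes V E \<sigma> f \<Longrightarrow> C' \<in> W_classes V E \<sigma> f \<Longrightarrow>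
    hd ys \<in> domain_of V E \<sigma> f C \<Longrightarrow> last ys \<in> domain_of V E \<sigma> f C' \<Longrightarrow>
    (C, C') \<in> (domain_adj V E \<sigma> f)\<^sup>*"
proof (induction ys arbitrary: C)
  case Nil
  then show ?case by simp
next
  case (Cons x ys)
  show ?case
  proof (cases "ys = []")
    case True
    have xV: "x \<in> V" using Cons.prems(3) by simp
    have xC: "x \<in> domain_of V E \<sigma> f C" using Cons.prems(6) by simp
    have xC': "x \<in> domain_of V E \<sigma> f C'" using Cons.prems(7) True by simp
    show ?thesis by (rule single_vertex[OF sg nz gc xV Cons.prems(4,5) xC xC'])
  next
    case False
    have "Suc 0 < length (x # ys)" using False by simp
    then have "{(x # ys) ! 0, (x # ys) ! Suc 0} \<in> E" using Cons.prems(2) by blast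
    then have e: "{x, ys ! 0} \<in> E" by simp
    have "ys ! 0 \<in> set ys" using False by simp
    then have y: "ys ! 0 \<in> V" using Cons.prems(3) by auto
    then obtain D where D: "D \<in> W_classes V E \<sigma> f" "ys ! 0 \<in> domain_of V E \<sigma> f D"
      using cover[OF sg nz gc] by blast
    have xC: "x \<in> domain_of V E \<sigma> f C" using Cons.prems(6) by simp
    have "(C, D) \<in> (domain_adj V E \<sigma> f)\<^sup>*"
      by (rule step_adj[OF Cons.prems(4) D(1) xC D(2) e])
    moreover have "(D, C') \<in> (domain_adj V E \<sigma> f)\<^sup>*"
    proof (rule Cons.IH[OF False _ _ D(1) Cons.prems(5)])
      show "\<forall>i. Suc i < length ys \<longrightarrow> {ys ! i, ys ! Suc i} \<in> E"
      proof (intro allI impI)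
        fix i assume "Suc i < length ys"
        then have "Suc (Suc i) < length (x # ys)" by simp
        then have "{(x # ys) ! Suc i, (x # ys) ! Suc (Suc i)} \<in> E" using Cons.prems(2) by blast
        then show "{ys ! i, ys ! Suc i} \<in> E" by simp
      qed
      show "set ys \<subseteq> V" using Cons.prems(3) by simp
      show "hd ys \<in> domain_of V E \<sigma> f D" using D(2) False by (simp add: hd_conv_nth)
      show "last ys \<in> domain_of V E \<sigma> f C'" using Cons.prems(7) False by simp
    qed
    ultimately show ?thesis by (rule rtrancl_trans)
  qed
qed

theorem proposition3p7:
  fixes V :: "'a set" and E :: "'a set set" and \<sigma> :: "'a set \<Rightarrow> real" and f :: "'a \<Rightarrow> real"
  assumes "signed_graph V E \<sigma>"
    and "\<exists>x\<in>V. f x \<noteq> 0"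
    and "graph_connected V E"
  shows "domain_graph_connected V E \<sigma> f"
  unfolding domain_graph_connected_def
proof (intro ballI)
  fix A B assume A: "A \<in> W_classes V E \<sigma> f" and B: "B \<in> W_classes V E \<sigma> f"
  obtain a where a: "a \<in> nonzero_set V f" "a \<in> A" using class_nonempty[OF A] by blast
  obtain b where b: "b \<in> nonzero_set V f" "b \<in> B" using class_nonempty[OF B] by blast
  have aV: "a \<in> V" and bV: "b \<in> V" using a b by (auto simp: nonzero_set_def)
  have aA: "a \<in> domain_of V E \<sigma> f A" using a by (simp add: domain_of_def)
  have bB: "b \<in> domain_of V E \<sigma> f B" using b by (simp add: domain_of_def)
  show "(A, B) \<in> (domain_adj V E \<sigma> f)\<^sup>*"
  proof (cases "a = b")
    case True
    then have "a \<in> domain_of V E \<sigma> f B" using bB by simp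
    then show ?thesis by (rule single_vertex[OF assms aV A B aA])
  next
    case False
    then obtain ys where w: "is_walk E ys" "hd ys = a" "last ys = b"
      using assms(3) aV bV unfolding graph_connected_def by blast
    have ne: "ys \<noteq> []" using w unfolding is_walk_def by auto
    have sv: "set ys \<subseteq> V"
    proof
      fix z assume "z \<in> set ys"
      then obtain i where "i < length ys" "ys ! i = z" by (metis in_set_conv_nth)
      then show "z \<in> V" using walk_in_V[OF assms(1) w(1)] by blast
    qed
    have ed: "\<forall>i. Suc i < length ys \<longrightarrow> {ys ! i, ys ! Suc i} \<in> E" using w(1) unfolding is_walk_def by blast
    have "hd ys \<in> domain_of V E \<sigma> f A" using w(2) aA by simp
    moreover have "last ys \<in> domain_of V E \<sigma> f B" using w(3) bB by simp
    ultimately show ?thesis by (rule walk_chain[OF assms ne ed sv A B])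
  qed
qed

end
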